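(* Let $G$ be a simple graph and $v_0\in V(G)$ with $N_G(v_0)=\{u_1,u_2\}$ ($u_1\ne u_2$). (i) Suppose $u_1u_2\in E(G)$, let $G'=G-u_1u_2-v_0$ and $g\in\mathrm{SEDF}^0(G')$. Define $f:E(G)\to\{1,-1\}$ by $f(e)=g(e)$ for $e\in E(G')$, $f(v_0u_i)=1$ for $i=1,2$, and $f(u_1u_2)=-1$. Then $f\in\mathrm{SEDF}^0(G)$ and $f(G)=g(G')+1$. (ii) Suppose $u_1u_2\notin E(G)$, let $G'=G+u_1u_2-v_0$ and $g\in\mathrm{SEDF}^0(G')$. Define $f:E(G)\to\{1,-1\}$ by $f(e)=g(e)$ for $e\in E(G')\setminus\{u_1u_2\}$, $f(u_1v_0)=1$, and $f(u_2v_0)=g(u_1u_2)$. Then $f\in\mathrm{SEDF}^0(G)$ and $f(G)=g(G')+1$.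
   Context: For a graph $H$ and $f:E(H)\to\{1,-1\}$, $f(H)=\sum_{e\in E(H)}f(e)$ and $f(v)=\sum_{e\in E_H(v)}f(e)$, where $E_H(v)$ is the set of edges of $H$ incident with $v$. $\mathrm{SEDF}^0(H)$ is the set of functions $f:E(H)\to\{1,-1\}$ such that (a) $f(v)\ge 0$ for all $v\in V(H)$, and (b) $f(u)+f(v)\ge 2$ for every edge $uv$ with $f(uv)=1$. $G-u_1u_2-v_0$ is obtained by deleting the edge $u_1u_2$ and the vertex $v_0$; $G+u_1u_2-v_0$ by adding the edge $u_1u_2$ and deleting $v_0$. *)

theory Defs
  imports Main
begin

definition simple_graph :: "'a set \<Rightarrow> 'a set set \<Rightarrow> bool" where
  "simple_graph V E \<longleftrightarrow> finite V \<and>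
     (\<forall>e\<in>E. \<exists>u v. u \<in> V \<and> v \<in> V \<and> u \<noteq> v \<and> e = {u, v})"

definition incident :: "'a set set \<Rightarrow> 'a \<Rightarrow> 'a set set" where
  "incident E v = {e \<in> E. v \<in> e}"

definition neighbors :: "'a set set \<Rightarrow> 'a \<Rightarrow> 'a set" where
  "neighbors E v = {u. {v, u} \<in> E}"

definition fsum :: "('a set \<Rightarrow> int) \<Rightarrow> 'a set set \<Rightarrow> int" where
  "fsum f E = (\<Sum>e\<in>E. f e)"

definition fvert :: "('a set \<Rightarrow> int) \<Rightarrow> 'a set set \<Rightarrow> 'a \<Rightarrow> int" where
  "fvert f E v = (\<Sum>e\<in>incident E v. f e)"

text \<open>SEDF^0(H) for H = (V,E); functions are total on edge-sets, only values on E matter.\<close>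
definition SEDF0 :: "'a set \<Rightarrow> 'a set set \<Rightarrow> ('a set \<Rightarrow> int) set" where
  "SEDF0 V E = {f. (\<forall>e\<in>E. f e = 1 \<or> f e = -1)
                  \<and> (\<forall>v\<in>V. fvert f E v \<ge> 0)
                  \<and> (\<forall>u v. {u, v} \<in> E \<and> f {u, v} = 1 \<longrightarrow> fvert f E u + fvert f E v \<ge> 2)}"

end

theory Submission
  imports Defs
begin

lemma fvert_empty[simp]: "fvert f {} w = 0"
  by (simp add: fvert_def incident_def)

lemma fvert_insert:
  assumes "finite A" "e \<notin> A"
  shows "fvert f (insert e A) w = (if w \<in> e then f e else 0) + fvert f A w"
proof -
  have "incident (insert e A) w = (if w \<in> e then insert e (incident A w) else incident A w)"
    by (auto simp: incident_def)
  moreover have "finite (incident A w)" "e \<notin> incident A w"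
    using assms by (auto simp: incident_def)
  ultimately show ?thesis by (simp add: fvert_def)
qed

lemma fvert_cong:
  assumes "\<forall>e\<in>A. f e = g e"
  shows "fvert f A w = fvert g A w"
  using assms unfolding fvert_def incident_def by (intro sum.cong) auto

lemma fsum_insert:
  assumes "finite A" "e \<notin> A"
  shows "fsum f (insert e A) = f e + fsum f A"
  using assms by (simp add: fsum_def)

lemma fsum_cong:
  assumes "\<forall>e\<in>A. f e = g e"
  shows "fsum f A = fsum g A"
  using assms unfolding fsum_def by (intro sum.cong) auto

lemma fvert_noinc:
  assumes "\<forall>e\<in>A. w \<notin> e"
  shows "fvert f A w = 0"
proof -
  have "incident A w = {}" using assms by (auto simp: incident_def)
  then show ?thesis by (simp add: fvert_def)
qed

theorem lemma2p3:
  fixes V :: "'a set" and E :: "'a set set" and v0 u1 u2 :: 'a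
  assumes "simple_graph V E" and "v0 \<in> V"
    and "neighbors E v0 = {u1, u2}" and "u1 \<noteq> u2"
  shows
   "({u1, u2} \<in> E \<longrightarrow>
      (\<forall>g f. g \<in> SEDF0 (V - {v0}) (E - {{u1, u2}} - incident E v0)
         \<and> (\<forall>e \<in> E - {{u1, u2}} - incident E v0. f e = g e)
         \<and> f {v0, u1} = 1 \<and> f {v0, u2} = 1 \<and> f {u1, u2} = -1
       \<longrightarrow> f \<in> SEDF0 V E
           \<and> fsum f E = fsum g (E - {{u1, u2}} - incident E v0) + 1))
    \<and>
    ({u1, u2} \<notin> E \<longrightarrow>
      (\<forall>g f. g \<in> SEDF0 (V - {v0}) (insert {u1, u2} (E - incident E v0))
         \<and> (\<forall>e \<in> E - incident E v0. f e = g e)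
         \<and> f {u1, v0} = 1 \<and> f {u2, v0} = g {u1, u2}
       \<longrightarrow> f \<in> SEDF0 V E
           \<and> fsum f E = fsum g (insert {u1, u2} (E - incident E v0)) + 1))"
proof -
  have sg: "finite V" "\<And>e. e \<in> E \<Longrightarrow> \<exists>u v. u \<in> V \<and> v \<in> V \<and> u \<noteq> v \<and> e = {u, v}"
    using assms(1) by (auto simp: simple_graph_def)
  have finE: "finite E"
  proof -
    have "E \<subseteq> Pow V" using sg(2) by blast
    thus ?thesis using sg(1) by (meson finite_Pow_iff finite_subset)
  qed
  have e1: "{v0, u1} \<in> E" and e2: "{v0, u2} \<in> E"
    using assms(3) by (auto simp: neighbors_def set_eq_iff)
  have d1: "v0 \<noteq> u1"
  proof
    assume "v0 = u1"
    then have "{v0} \<in> E" using e1 by simp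
    then show False using sg(2) by (metis doubleton_eq_iff singleton_insert_inj_eq)
  qed
  have d2: "v0 \<noteq> u2"
  proof
    assume "v0 = u2"
    then have "{v0} \<in> E" using e2 by simp
    then show False using sg(2) by (metis doubleton_eq_iff singleton_insert_inj_eq)
  qed
  have uV: "u1 \<in> V" "u2 \<in> V"
    using sg(2)[OF e1] sg(2)[OF e2] by (auto simp: doubleton_eq_iff)
  have I: "incident E v0 = {{v0, u1}, {v0, u2}}"
  proof
    show "incident E v0 \<subseteq> {{v0, u1}, {v0, u2}}"
    proof
      fix e assume "e \<in> incident E v0"
      then have eE: "e \<in> E" and "v0 \<in> e" by (auto simp: incident_def)
      then obtain x where "e = {v0, x}" using sg(2) by (metis insert_commute insertE singletonD)
      then have "x \<in> neighbors E v0" using eE by (simp add: neighbors_def)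
      then show "e \<in> {{v0, u1}, {v0, u2}}" using assms(3) \<open>e = {v0, x}\<close> by auto
    qed
    show "{{v0, u1}, {v0, u2}} \<subseteq> incident E v0" using e1 e2 by (auto simp: incident_def)
  qed
  have ne12: "{v0, u1} \<noteq> {v0, u2}" using assms(4) d1 d2 by (auto simp: doubleton_eq_iff)
  have edgeV: "\<And>u v. {u, v} \<in> E \<Longrightarrow> u \<in> V \<and> v \<in> V"
    using sg(2) by (metis doubleton_eq_iff)
  have edgene: "\<And>u v. {u, v} \<in> E \<Longrightarrow> u \<noteq> v"
    using sg(2) by (metis doubleton_eq_iff singleton_insert_inj_eq)
  show ?thesis
  proof (intro conjI impI allI)
    fix g f
    assume u12: "{u1, u2} \<in> E"
    define E0 where "E0 = E - {{u1, u2}} - incident E v0"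
    assume H: "g \<in> SEDF0 (V - {v0}) (E - {{u1, u2}} - incident E v0)
         \<and> (\<forall>e \<in> E - {{u1, u2}} - incident E v0. f e = g e)
         \<and> f {v0, u1} = 1 \<and> f {v0, u2} = 1 \<and> f {u1, u2} = -1"
    then have gS: "g \<in> SEDF0 (V - {v0}) E0" and fg: "\<forall>e\<in>E0. f e = g e"
      and f1: "f {v0, u1} = 1" and f2: "f {v0, u2} = 1" and f3: "f {u1, u2} = -1"
      by (auto simp: E0_def)
    have finE0: "finite E0" using finE by (simp add: E0_def)
    have nv0: "\<forall>e\<in>E0. v0 \<notin> e" by (auto simp: E0_def incident_def)
    have Edec: "E = insert {u1, u2} (insert {v0, u1} (insert {v0, u2} E0))"
      using u12 e1 e2 I by (auto simp: E0_def)
    have n1: "{u1,u2} \<notin> insert {v0, u1} (insert {v0, u2} E0)"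
      using d1 d2 by (auto simp: E0_def doubleton_eq_iff)
    have n2: "{v0,u1} \<notin> insert {v0, u2} E0" using ne12 nv0 by auto
    have n3: "{v0,u2} \<notin> E0" using nv0 by auto
    have fv: "\<And>w. fvert f E w = (if w \<in> {u1,u2} then -1 else 0) + (if w \<in> {v0,u1} then 1 else 0)
        + (if w \<in> {v0,u2} then 1 else 0) + fvert g E0 w"
      unfolding Edec using finE0 n1 n2 n3 f1 f2 f3
      by (simp add: fvert_insert fvert_cong[OF fg] del: insert_iff)
    have gv0: "fvert g E0 v0 = 0" using nv0 by (rule fvert_noinc)
    have fvv0: "fvert f E v0 = 2" using fv[of v0] gv0 d1 d2 by simp
    have fvo: "\<And>w. w \<noteq> v0 \<Longrightarrow> fvert f E w = fvert g E0 w"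
      using fv assms(4) by auto
    have gvals: "\<forall>e\<in>E0. g e = 1 \<or> g e = -1"
      and gvert: "\<forall>v\<in>V - {v0}. fvert g E0 v \<ge> 0"
      and gedge: "\<forall>u v. {u, v} \<in> E0 \<and> g {u, v} = 1 \<longrightarrow> fvert g E0 u + fvert g E0 v \<ge> 2"
      using gS by (auto simp: SEDF0_def)
    have fvert_nn: "\<And>v. v \<in> V \<Longrightarrow> fvert f E v \<ge> 0"
      using fvv0 fvo gvert by (metis DiffI empty_iff insert_iff order_refl zero_le_numeral)
    show "f \<in> SEDF0 V E"
      unfolding SEDF0_def
    proof (intro CollectI conjI ballI allI impI)
      fix e assume "e \<in> E"
      then show "f e = 1 \<or> f e = -1" using Edec gvals fg f1 f2 f3 by auto
    next
      fix v assume "v \<in> V" then show "fvert f E v \<ge> 0" by (rule fvert_nn)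
    next
      fix u v assume A: "{u, v} \<in> E \<and> f {u, v} = 1"
      then have "{u,v} = {u1,u2} \<or> {u,v} = {v0,u1} \<or> {u,v} = {v0,u2} \<or> {u,v} \<in> E0"
        using Edec by blast
      moreover have "{u,v} \<noteq> {u1,u2}" using A f3 by auto
      ultimately consider "{u,v} = {v0,u1}" | "{u,v} = {v0,u2}" | "{u,v} \<in> E0" by blast
      then show "fvert f E u + fvert f E v \<ge> 2"
      proof cases
        case 1
        then have "(u = v0 \<and> v = u1) \<or> (u = u1 \<and> v = v0)" by (auto simp: doubleton_eq_iff)
        then show ?thesis using fvv0 fvert_nn uV by auto
      next
        case 2
        then have "(u = v0 \<and> v = u2) \<or> (u = u2 \<and> v = v0)" by (auto simp: doubleton_eq_iff)
        then show ?thesis using fvv0 fvert_nn uV by auto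
      next
        case 3
        then have "u \<noteq> v0" "v \<noteq> v0" using nv0 by auto
        moreover have "g {u,v} = 1" using 3 A fg by auto
        ultimately show ?thesis using gedge 3 fvo by auto
      qed
    qed
    have "fsum f E = fsum g E0 + 1"
      unfolding Edec using finE0 n1 n2 n3 f1 f2 f3
      by (simp add: fsum_insert fsum_cong[OF fg] del: insert_iff)
    then show "fsum f E = fsum g (E - {{u1, u2}} - incident E v0) + 1"
      by (simp add: E0_def)
  next
    fix g f
    assume u12: "{u1, u2} \<notin> E"
    define E0 where "E0 = E - incident E v0"
    assume H: "g \<in> SEDF0 (V - {v0}) (insert {u1, u2} (E - incident E v0))
         \<and> (\<forall>e \<in> E - incident E v0. f e = g e)
         \<and> f {u1, v0} = 1 \<and> f {u2, v0} = g {u1, u2}"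
    then have gS: "g \<in> SEDF0 (V - {v0}) (insert {u1,u2} E0)" and fg: "\<forall>e\<in>E0. f e = g e"
      and f1: "f {v0, u1} = 1" and f2: "f {v0, u2} = g {u1, u2}"
      by (auto simp: E0_def insert_commute)
    have finE0: "finite E0" using finE by (simp add: E0_def)
    have nv0: "\<forall>e\<in>E0. v0 \<notin> e" by (auto simp: E0_def incident_def)
    have Edec: "E = insert {v0, u1} (insert {v0, u2} E0)"
      using e1 e2 I by (auto simp: E0_def)
    have n0: "{u1,u2} \<notin> E0" using u12 by (auto simp: E0_def)
    have n2: "{v0,u1} \<notin> insert {v0, u2} E0" using ne12 nv0 by auto
    have n3: "{v0,u2} \<notin> E0" using nv0 by auto
    have gvals: "\<forall>e\<in>insert {u1,u2} E0. g e = 1 \<or> g e = -1"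
      and gvert: "\<forall>v\<in>V - {v0}. fvert g (insert {u1,u2} E0) v \<ge> 0"
      and gedge: "\<forall>u v. {u, v} \<in> insert {u1,u2} E0 \<and> g {u, v} = 1 \<longrightarrow>
          fvert g (insert {u1,u2} E0) u + fvert g (insert {u1,u2} E0) v \<ge> 2"
      using gS by (auto simp: SEDF0_def)
    define c where "c = g {u1, u2}"
    have c: "c = 1 \<or> c = -1" using gvals c_def by auto
    have gv: "\<And>w. fvert g (insert {u1,u2} E0) w = (if w \<in> {u1,u2} then c else 0) + fvert g E0 w"
      using finE0 n0 by (simp add: fvert_insert c_def del: insert_iff)
    have fv: "\<And>w. fvert f E w = (if w \<in> {v0,u1} then 1 else 0)
        + (if w \<in> {v0,u2} then c else 0) + fvert g E0 w"
      unfolding Edec using finE0 n2 n3 f1 f2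
      by (simp add: fvert_insert fvert_cong[OF fg] c_def del: insert_iff)
    have gv0: "fvert g E0 v0 = 0" using nv0 by (rule fvert_noinc)
    have fvv0: "fvert f E v0 = 1 + c" using fv[of v0] gv0 d1 d2 by simp
    have fvu1: "fvert f E u1 = fvert g (insert {u1,u2} E0) u1 + 1 - c"
      using fv[of u1] gv[of u1] d1 assms(4) by simp
    have fvu2: "fvert f E u2 = fvert g (insert {u1,u2} E0) u2"
      using fv[of u2] gv[of u2] d2 assms(4) by simp
    have fvo: "\<And>w. w \<noteq> v0 \<Longrightarrow> fvert f E w \<ge> fvert g (insert {u1,u2} E0) w"
      using fv gv c assms(4) d1 d2 by auto
    have fvert_nn: "\<And>v. v \<in> V \<Longrightarrow> fvert f E v \<ge> 0"
    proof -
      fix v assume "v \<in> V"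
      show "fvert f E v \<ge> 0"
      proof (cases "v = v0")
        case True then show ?thesis using fvv0 c by auto
      next
        case False then show ?thesis using fvo[OF False] gvert \<open>v \<in> V\<close> by force
      qed
    qed
    show "f \<in> SEDF0 V E"
      unfolding SEDF0_def
    proof (intro CollectI conjI ballI allI impI)
      fix e assume "e \<in> E"
      then show "f e = 1 \<or> f e = -1" using Edec gvals fg f1 f2 c_def by auto
    next
      fix v assume "v \<in> V" then show "fvert f E v \<ge> 0" by (rule fvert_nn)
    next
      fix u v assume A: "{u, v} \<in> E \<and> f {u, v} = 1"
      then consider "{u,v} = {v0,u1}" | "{u,v} = {v0,u2}" | "{u,v} \<in> E0"
        using Edec by blast
      then show "fvert f E u + fvert f E v \<ge> 2"
      proof cases
        case 1
        then have "(u = v0 \<and> v = u1) \<or> (u = u1 \<and> v = v0)" by (auto simp: doubleton_eq_iff)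
        moreover have "fvert g (insert {u1,u2} E0) u1 \<ge> 0" using gvert uV d1 by auto
        ultimately show ?thesis using fvv0 fvu1 by auto
      next
        case 2
        then have "(u = v0 \<and> v = u2) \<or> (u = u2 \<and> v = v0)" by (auto simp: doubleton_eq_iff)
        moreover have "fvert g (insert {u1,u2} E0) u2 \<ge> 0" using gvert uV d2 by auto
        moreover have "c = 1" using A 2 f2 c_def by auto
        ultimately show ?thesis using fvv0 fvu2 by auto
      next
        case 3
        then have "u \<noteq> v0" "v \<noteq> v0" using nv0 by auto
        moreover have "g {u,v} = 1" using 3 A fg by auto
        ultimately show ?thesis using gedge 3 fvo[of u] fvo[of v] by force
      qed
    qed
    have "fsum f E = fsum g (insert {u1, u2} E0) + 1"
      unfolding Edec using finE0 n0 n2 n3 f1 f2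
      by (simp add: fsum_insert fsum_cong[OF fg] del: insert_iff)
    then show "fsum f E = fsum g (insert {u1, u2} (E - incident E v0)) + 1"
      by (simp add: E0_def)
  qed
qed

end
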